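(* Let $G=HN\le\mathrm{Sym}(\Omega)$ be a finite non-Frobenius $2$-transitive affine permutation group, where $N$ is the regular normal elementary abelian subgroup of order $p^k$ ($p$ prime) and $H$ is a point stabiliser. Let $H_p$ be a Sylow $p$-subgroup of $H$ and assume $H_p\ne1$. (i) $[N,H_p]$ is a proper subgroup of $N$, and $tz$ is a derangement for all $t\in H_p$ and all $z\in N\setminus[N,H_p]$. (ii) Suppose furthermore that $\kappa(G)=2$, and let $x\in N\setminus\{1\}$ (so $N\setminus\{1\}=x^G$). Then $H_p$ has exponent $p$, $H_p\setminus\{1\}\subseteq t^H$ for some $t\in H_p\setminus\{1\}$, $|\mathrm C_H(x)|=p^b$ for some $b\ge1$, and hence $|H|=(p^k-1)p^b$.
   Context: A derangement is an element fixing no point; $\kappa(G)$ is the number of conjugacy classes of derangements. A Frobenius group is a transitive non-regular group in which only the identity fixes more than one point. $[N,H_p]$ is the subgroup generated by commutators $[n,h]$, $n\in N$, $h\in H_p$. *)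

theory Defs
  imports "HOL-Algebra.Algebra"
begin

text \<open>Permutation groups on a finite set Omega are subgroups of BijGroup Omega;
  elements are (extensional) bijections of Omega, multiplication is composition.\<close>

abbreviation Sym :: "'a set \<Rightarrow> ('a \<Rightarrow> 'a) monoid" where
  "Sym \<Omega> \<equiv> BijGroup \<Omega>"

definition derangement :: "'a set \<Rightarrow> ('a \<Rightarrow> 'a) \<Rightarrow> bool" where
  "derangement \<Omega> g \<longleftrightarrow> (\<forall>w\<in>\<Omega>. g w \<noteq> w)"

definition point_stab :: "'a set \<Rightarrow> ('a \<Rightarrow> 'a) set \<Rightarrow> 'a \<Rightarrow> ('a \<Rightarrow> 'a) set" where
  "point_stab \<Omega> G w = {g \<in> G. g w = w}"

definition transitive_on :: "'a set \<Rightarrow> ('a \<Rightarrow> 'a) set \<Rightarrow> bool" where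
  "transitive_on \<Omega> G \<longleftrightarrow> \<Omega> \<noteq> {} \<and> (\<forall>a\<in>\<Omega>. \<forall>b\<in>\<Omega>. \<exists>g\<in>G. g a = b)"

definition two_transitive_on :: "'a set \<Rightarrow> ('a \<Rightarrow> 'a) set \<Rightarrow> bool" where
  "two_transitive_on \<Omega> G \<longleftrightarrow> card \<Omega> \<ge> 2 \<and>
     (\<forall>a\<in>\<Omega>. \<forall>b\<in>\<Omega>. \<forall>c\<in>\<Omega>. \<forall>d\<in>\<Omega>. a \<noteq> b \<longrightarrow> c \<noteq> d \<longrightarrow>
        (\<exists>g\<in>G. g a = c \<and> g b = d))"

definition regular_on :: "'a set \<Rightarrow> ('a \<Rightarrow> 'a) set \<Rightarrow> bool" where
  "regular_on \<Omega> G \<longleftrightarrow> transitive_on \<Omega> G \<and>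
     (\<forall>g\<in>G. \<forall>w\<in>\<Omega>. g w = w \<longrightarrow> g = \<one>\<^bsub>Sym \<Omega>\<^esub>)"

definition frobenius_on :: "'a set \<Rightarrow> ('a \<Rightarrow> 'a) set \<Rightarrow> bool" where
  "frobenius_on \<Omega> G \<longleftrightarrow> transitive_on \<Omega> G \<and> \<not> regular_on \<Omega> G \<and>
     (\<forall>g\<in>G. \<forall>a\<in>\<Omega>. \<forall>b\<in>\<Omega>. a \<noteq> b \<and> g a = a \<and> g b = b \<longrightarrow> g = \<one>\<^bsub>Sym \<Omega>\<^esub>)"

definition conj_class :: "'a set \<Rightarrow> ('a \<Rightarrow> 'a) set \<Rightarrow> ('a \<Rightarrow> 'a) \<Rightarrow> ('a \<Rightarrow> 'a) set" where
  "conj_class \<Omega> G g = {h \<otimes>\<^bsub>Sym \<Omega>\<^esub> g \<otimes>\<^bsub>Sym \<Omega>\<^esub> inv\<^bsub>Sym \<Omega>\<^esub> h | h. h \<in> G}"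

definition kappa :: "'a set \<Rightarrow> ('a \<Rightarrow> 'a) set \<Rightarrow> nat" where
  "kappa \<Omega> G = card {conj_class \<Omega> G g | g. g \<in> G \<and> derangement \<Omega> g}"

definition centraliser :: "'a set \<Rightarrow> ('a \<Rightarrow> 'a) set \<Rightarrow> ('a \<Rightarrow> 'a) \<Rightarrow> ('a \<Rightarrow> 'a) set" where
  "centraliser \<Omega> H x = {h \<in> H. h \<otimes>\<^bsub>Sym \<Omega>\<^esub> x = x \<otimes>\<^bsub>Sym \<Omega>\<^esub> h}"

definition commutator_subgroup :: "'a set \<Rightarrow> ('a \<Rightarrow> 'a) set \<Rightarrow> ('a \<Rightarrow> 'a) set \<Rightarrow> ('a \<Rightarrow> 'a) set" where
  "commutator_subgroup \<Omega> N K = generate (Sym \<Omega>)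
     {inv\<^bsub>Sym \<Omega>\<^esub> n \<otimes>\<^bsub>Sym \<Omega>\<^esub> inv\<^bsub>Sym \<Omega>\<^esub> h \<otimes>\<^bsub>Sym \<Omega>\<^esub> n \<otimes>\<^bsub>Sym \<Omega>\<^esub> h | n h. n \<in> N \<and> h \<in> K}"

definition elem_abelian :: "'a set \<Rightarrow> ('a \<Rightarrow> 'a) set \<Rightarrow> nat \<Rightarrow> bool" where
  "elem_abelian \<Omega> N p \<longleftrightarrow>
     (\<forall>x\<in>N. \<forall>y\<in>N. x \<otimes>\<^bsub>Sym \<Omega>\<^esub> y = y \<otimes>\<^bsub>Sym \<Omega>\<^esub> x) \<and>
     (\<forall>x\<in>N. x [^]\<^bsub>Sym \<Omega>\<^esub> p = \<one>\<^bsub>Sym \<Omega>\<^esub>)"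

definition sylow_sub :: "'a set \<Rightarrow> nat \<Rightarrow> ('a \<Rightarrow> 'a) set \<Rightarrow> ('a \<Rightarrow> 'a) set \<Rightarrow> bool" where
  "sylow_sub \<Omega> p H P \<longleftrightarrow> subgroup P (Sym \<Omega>) \<and> P \<subseteq> H \<and>
     card P = p ^ multiplicity p (card H)"

end

theory Submission
  imports Defs
begin

lemma action_as_group_action:
  fixes Q (structure)
  assumes grp: "group Q"
    and closed: "\<And>g x. g \<in> carrier Q \<Longrightarrow> x \<in> E \<Longrightarrow> act g x \<in> E"
    and one: "\<And>x. x \<in> E \<Longrightarrow> act \<one>\<^bsub>Q\<^esub> x = x"
    and mult: "\<And>g h x. g \<in> carrier Q \<Longrightarrow> h \<in> carrier Q \<Longrightarrow> x \<in> E \<Longrightarrow> act (g \<otimes>\<^bsub>Q\<^esub> h) x = act g (act h x)"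
  shows "group_action Q E (\<lambda>g. restrict (act g) E)"
proof -
  interpret Q: group Q by (rule grp)
  have bij: "bij_betw (act g) E E" if g: "g \<in> carrier Q" for g
  proof -
    have inv1: "act (inv\<^bsub>Q\<^esub> g) (act g x) = x" if "x \<in> E" for x
      using mult[of "inv\<^bsub>Q\<^esub> g" g x] one that g by simp
    have inv2: "act g (act (inv\<^bsub>Q\<^esub> g) x) = x" if "x \<in> E" for x
      using mult[of g "inv\<^bsub>Q\<^esub> g" x] one that g by simp
    show ?thesis
      apply (rule bij_betw_byWitness[where f'="act (inv\<^bsub>Q\<^esub> g)"])
      using inv1 inv2 closed g by auto
  qed
  show ?thesis
    unfolding group_action_def group_hom_def group_hom_axioms_def
  proof (intro conjI)
    show "group Q" by (rule grp)
    show "group (BijGroup E)" by (rule group_BijGroup)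
    show "(\<lambda>g. restrict (act g) E) \<in> hom Q (BijGroup E)"
      unfolding hom_def
    proof (intro CollectI conjI ballI)
      show "(\<lambda>g. restrict (act g) E) \<in> carrier Q \<rightarrow> carrier (BijGroup E)"
        using bij by (auto simp: BijGroup_def Bij_def bij_betw_def inj_on_def)
      fix g h assume g: "g \<in> carrier Q" and h: "h \<in> carrier Q"
      have b: "restrict (act g) E \<in> Bij E" "restrict (act h) E \<in> Bij E"
        using bij g h by (auto simp: Bij_def bij_betw_def inj_on_def)
      show "restrict (act (g \<otimes>\<^bsub>Q\<^esub> h)) E =
            restrict (act g) E \<otimes>\<^bsub>BijGroup E\<^esub> restrict (act h) E"
        using b g h closed by (auto simp: BijGroup_def compose_def mult)
    qed
  qed
qed

lemma pgroup_fix_dvd: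
  fixes Q (structure) and p :: nat
  assumes grp: "group Q" and finQ: "finite (carrier Q)" and cardQ: "card (carrier Q) = p ^ m"
    and pp: "Factorial_Ring.prime p" and finX: "finite E"
    and closed: "\<And>g x. g \<in> carrier Q \<Longrightarrow> x \<in> E \<Longrightarrow> act g x \<in> E"
    and one: "\<And>x. x \<in> E \<Longrightarrow> act \<one>\<^bsub>Q\<^esub> x = x"
    and mult: "\<And>g h x. g \<in> carrier Q \<Longrightarrow> h \<in> carrier Q \<Longrightarrow> x \<in> E \<Longrightarrow> act (g \<otimes>\<^bsub>Q\<^esub> h) x = act g (act h x)"
    and dvdX: "p dvd card E"
  shows "p dvd card {x\<in>E. \<forall>g\<in>carrier Q. act g x = x}"
proof -
  interpret Q: group Q by (rule grp)
  define \<phi> where "\<phi> = (\<lambda>g. restrict (act g) E)"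
  interpret A: group_action Q E \<phi>
    unfolding \<phi>_def by (rule action_as_group_action[OF grp closed one mult])
  define F where "F = {x\<in>E. \<forall>g\<in>carrier Q. act g x = x}"
  define Y where "Y = E - F"
  have orb: "orbit Q \<phi> x = {act g x | g. g \<in> carrier Q}" if "x \<in> E" for x
    using that by (auto simp: orbit_def \<phi>_def)
  have orbsub: "orbit Q \<phi> y \<subseteq> Y" if y: "y \<in> Y" for y
  proof
    fix z assume "z \<in> orbit Q \<phi> y"
    then obtain g where g: "g \<in> carrier Q" and z: "z = act g y" using orb y Y_def by auto
    have zX: "z \<in> E" using closed g y z Y_def by auto
    show "z \<in> Y"
    proof (rule ccontr)
      assume "z \<notin> Y"
      hence "z \<in> F" using zX Y_def by auto
      hence "act (inv\<^bsub>Q\<^esub> g) z = z" using F_def g by auto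
      moreover have "act (inv\<^bsub>Q\<^esub> g) z = y" using z mult[of "inv\<^bsub>Q\<^esub> g" g y] one g y Y_def by auto
      ultimately have "y = z" by simp
      hence "y \<in> F" using \<open>z \<in> F\<close> by simp
      thus False using y Y_def by auto
    qed
  qed
  have orbdvd: "p dvd card (orbit Q \<phi> y)" if y: "y \<in> Y" for y
  proof -
    have yX: "y \<in> E" using y Y_def by auto
    have "card (orbit Q \<phi> y) * card (stabilizer Q \<phi> y) = p ^ m"
      using A.orbit_stabilizer_theorem[OF yX] cardQ by (simp add: order_def)
    hence "card (orbit Q \<phi> y) dvd p ^ m" by (metis dvd_triv_left)
    then obtain i where i: "card (orbit Q \<phi> y) = p ^ i" using divides_primepow_nat[OF pp] by blast
    obtain g where g: "g \<in> carrier Q" "act g y \<noteq> y" using y Y_def F_def by auto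
    have "y \<in> orbit Q \<phi> y" by (rule A.orbit_refl[OF yX])
    moreover have "act g y \<in> orbit Q \<phi> y" using orb[OF yX] g(1) by blast
    ultimately have "{y, act g y} \<subseteq> orbit Q \<phi> y" by blast
    moreover have "finite (orbit Q \<phi> y)" using orbsub[OF y] finX Y_def finite_subset by blast
    ultimately have "card {y, act g y} \<le> card (orbit Q \<phi> y)" by (rule card_mono[rotated])
    hence "2 \<le> p ^ i" using g(2) i by simp
    hence "i \<noteq> 0" by (cases i) auto
    thus ?thesis using i by (simp add: dvd_power)
  qed
  let ?C = "(orbit Q \<phi>) ` Y"
  have U: "\<Union>?C = Y" using orbsub A.orbit_refl Y_def by auto
  have disj: "pairwise disjnt ?C"
  proof (rule pairwiseI)
    fix O1 O2 assume "O1 \<in> ?C" "O2 \<in> ?C" "O1 \<noteq> O2"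
    then obtain y1 y2 where "y1 \<in> Y" "y2 \<in> Y" "O1 = orbit Q \<phi> y1" "O2 = orbit Q \<phi> y2" by auto
    hence "O1 \<in> orbits Q E \<phi>" "O2 \<in> orbits Q E \<phi>" using Y_def by (auto simp: orbits_def)
    thus "disjnt O1 O2" using A.disjoint_union \<open>O1 \<noteq> O2\<close> by (auto simp: disjnt_def)
  qed
  have finY: "finite Y" using finX Y_def by simp
  have "card Y = sum card ?C"
  proof -
    have "card (\<Union>?C) = sum card ?C"
    proof (rule card_Union_disjoint[OF disj])
      fix A assume "A \<in> ?C"
      then obtain y where "y \<in> Y" "A = orbit Q \<phi> y" by blast
      thus "finite A" using orbsub finY by (metis rev_finite_subset)
    qed
    thus ?thesis using U by simp
  qed
  hence pY: "p dvd card Y" by (auto intro!: dvd_sum orbdvd)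
  have FE: "F \<subseteq> E" using F_def by auto
  have "card E = card F + card Y" unfolding Y_def
    using card_Diff_subset[OF finite_subset[OF FE finX] FE] card_mono[OF finX FE] by simp
  hence "p dvd card F + card Y" using dvdX by simp
  hence "p dvd card F" using dvd_add_left_iff[OF pY] by blast
  thus ?thesis unfolding F_def .
qed



locale L =
  fixes \<Omega> :: "'a set" and G N H Hp :: "('a \<Rightarrow> 'a) set" and p k :: nat and \<omega> :: 'a
  assumes fin: "finite \<Omega>"
    and G_sub: "subgroup G (Sym \<Omega>)"
    and two_trans: "two_transitive_on \<Omega> G"
    and p_prime: "Factorial_Ring.prime p"
    and N_normal: "N \<lhd> (Sym \<Omega>)\<lparr>carrier := G\<rparr>"
    and N_regular: "regular_on \<Omega> N"
    and N_elab: "elem_abelian \<Omega> N p"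
    and N_card: "card N = p ^ k"
    and \<omega>: "\<omega> \<in> \<Omega>"
    and H_def: "H = point_stab \<Omega> G \<omega>"
    and Hp_syl: "sylow_sub \<Omega> p H Hp"
    and Hp_nontriv: "Hp \<noteq> {\<one>\<^bsub>Sym \<Omega>\<^esub>}"

sublocale L \<subseteq> S: group "Sym \<Omega>" by (rule group_BijGroup)

context L begin

abbreviation mul (infixl "\<star>" 70) where "x \<star> y \<equiv> x \<otimes>\<^bsub>Sym \<Omega>\<^esub> y"
abbreviation iv where "iv x \<equiv> inv\<^bsub>Sym \<Omega>\<^esub> x"
abbreviation one1 ("\<one>") where "\<one> \<equiv> \<one>\<^bsub>Sym \<Omega>\<^esub>"

lemma app_closed: "g \<in> carrier (Sym \<Omega>) \<Longrightarrow> w \<in> \<Omega> \<Longrightarrow> g w \<in> \<Omega>"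
  by (auto simp: BijGroup_def Bij_def bij_betw_def)
lemma app_mul: "g \<in> carrier (Sym \<Omega>) \<Longrightarrow> h \<in> carrier (Sym \<Omega>) \<Longrightarrow> w \<in> \<Omega> \<Longrightarrow> (g \<star> h) w = g (h w)"
  by (simp add: BijGroup_def compose_def)
lemma app_one: "w \<in> \<Omega> \<Longrightarrow> \<one> w = w"
  by (simp add: BijGroup_def)
lemma app_inv: "g \<in> carrier (Sym \<Omega>) \<Longrightarrow> w \<in> \<Omega> \<Longrightarrow> iv g (g w) = w"
  by (metis S.l_inv app_mul app_one S.inv_closed)
lemma app_inv2: "g \<in> carrier (Sym \<Omega>) \<Longrightarrow> w \<in> \<Omega> \<Longrightarrow> g (iv g w) = w"
  by (metis S.r_inv app_mul app_one S.inv_closed)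

lemma G_sub': "G \<subseteq> carrier (Sym \<Omega>)" using G_sub subgroup.subset by blast
lemma GG: "group ((Sym \<Omega>)\<lparr>carrier := G\<rparr>)" using G_sub S.subgroup_imp_group by blast
lemma N_subG: "subgroup N ((Sym \<Omega>)\<lparr>carrier := G\<rparr>)" using N_normal normal_def by blast
lemma N_G: "N \<subseteq> G" using N_subG subgroup.subset by fastforce
lemma N_sub: "subgroup N (Sym \<Omega>)"
  using N_subG G_sub S.incl_subgroup by blast
lemma N_S: "N \<subseteq> carrier (Sym \<Omega>)" using N_G G_sub' by blast
lemma N_conj: "g \<in> G \<Longrightarrow> n \<in> N \<Longrightarrow> g \<star> n \<star> iv g \<in> N"
  using normal.inv_op_closed2[OF N_normal, of g n] G_sub by (simp add: S.m_inv_consistent)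
lemma N_conj': "g \<in> G \<Longrightarrow> n \<in> N \<Longrightarrow> iv g \<star> n \<star> g \<in> N"
  using normal.inv_op_closed1[OF N_normal, of g n] G_sub by (simp add: S.m_inv_consistent)
lemma N_comm: "x \<in> N \<Longrightarrow> y \<in> N \<Longrightarrow> x \<star> y = y \<star> x"
  using N_elab by (simp add: elem_abelian_def)
lemma N_trans: "a \<in> \<Omega> \<Longrightarrow> b \<in> \<Omega> \<Longrightarrow> \<exists>n\<in>N. n a = b"
  using N_regular by (simp add: regular_on_def transitive_on_def)
lemma N_reg: "n \<in> N \<Longrightarrow> w \<in> \<Omega> \<Longrightarrow> n w = w \<Longrightarrow> n = \<one>"
  using N_regular by (auto simp: regular_on_def)

lemma H_sub: "subgroup H (Sym \<Omega>)"
proof -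
  have "H = G \<inter> {g \<in> carrier (Sym \<Omega>). g \<omega> = \<omega>}" using H_def G_sub' by (auto simp: point_stab_def)
  moreover have "subgroup {g \<in> carrier (Sym \<Omega>). g \<omega> = \<omega>} (Sym \<Omega>)"
    by (rule S.subgroupI) (auto simp: app_mul app_one \<omega> S.m_closed, metis app_inv \<omega>)
  ultimately show ?thesis using G_sub S.subgroups_Inter_pair by auto
qed
lemma H_G: "H \<subseteq> G" using H_def by (auto simp: point_stab_def)
lemma H_S: "H \<subseteq> carrier (Sym \<Omega>)" using H_G G_sub' by blast
lemma H_fix: "h \<in> H \<Longrightarrow> h \<omega> = \<omega>" using H_def by (auto simp: point_stab_def)
lemma H_I: "g \<in> G \<Longrightarrow> g \<omega> = \<omega> \<Longrightarrow> g \<in> H" using H_def by (auto simp: point_stab_def)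
lemma HN: "h \<in> H \<Longrightarrow> h \<in> N \<Longrightarrow> h = \<one>" using H_fix N_reg \<omega> by blast

lemma Hp_sub: "subgroup Hp (Sym \<Omega>)" and Hp_H: "Hp \<subseteq> H"
  and Hp_card: "card Hp = p ^ multiplicity p (card H)"
  using Hp_syl by (auto simp: sylow_sub_def)

end


context L begin

lemma cancel1 [simp]: "x \<in> carrier (Sym \<Omega>) \<Longrightarrow> y \<in> carrier (Sym \<Omega>) \<Longrightarrow> x \<star> y \<star> iv y = x"
  by (simp add: S.m_assoc)
lemma cancel2 [simp]: "x \<in> carrier (Sym \<Omega>) \<Longrightarrow> y \<in> carrier (Sym \<Omega>) \<Longrightarrow> x \<star> iv y \<star> y = x"
  by (simp add: S.m_assoc)
lemmas la = S.m_assoc[symmetric]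

lemma finS: "finite (carrier (Sym \<Omega>))"
proof -
  have "carrier (Sym \<Omega>) \<subseteq> PiE \<Omega> (\<lambda>_. \<Omega>)"
    by (auto simp: BijGroup_def Bij_def PiE_def bij_betw_def)
  moreover have "finite (PiE \<Omega> (\<lambda>_. \<Omega>))" using fin by (simp add: finite_PiE)
  ultimately show ?thesis using finite_subset by blast
qed

lemma finG: "finite G" using finS G_sub' finite_subset by blast
lemma finN: "finite N" using finS N_S finite_subset by blast
lemma finH: "finite H" using finS H_S finite_subset by blast

lemma decomp: assumes g: "g \<in> G" shows "\<exists>c\<in>H. \<exists>a\<in>N. g = c \<star> a"
proof -
  have gw: "g \<omega> \<in> \<Omega>" using app_closed g G_sub' \<omega> by blast
  obtain n where n: "n \<in> N" "n \<omega> = g \<omega>" using N_trans[OF \<omega> gw] by blast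
  have nS: "n \<in> carrier (Sym \<Omega>)" using n N_S by blast
  have gS: "g \<in> carrier (Sym \<Omega>)" using g G_sub' by blast
  define c where "c = iv n \<star> g"
  have cG: "c \<in> G" unfolding c_def using n N_G g G_sub
    by (meson subgroup.m_closed subgroup.m_inv_closed subsetD)
  have "c \<omega> = \<omega>" unfolding c_def using app_mul nS gS \<omega> n(2) app_inv
    by (metis S.inv_closed)
  hence cH: "c \<in> H" using H_I cG by blast
  have cS: "c \<in> carrier (Sym \<Omega>)" using cG G_sub' by blast
  define a where "a = iv c \<star> n \<star> c"
  have aN: "a \<in> N" unfolding a_def using N_conj' cG n(1) by blast
  have "c \<star> a = n \<star> c" unfolding a_def using nS cS by (simp add: la)
  also have "\<dots> = g" unfolding c_def using nS gS by (simp add: la)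
  finally have "c \<star> a = g" .
  thus ?thesis using cH aN by metis
qed

lemma fix_char:
  assumes h: "h \<in> H" and n: "n \<in> N" and w: "w \<in> \<Omega>" and fx: "(h \<star> n) w = w"
  shows "\<exists>m\<in>N. n = iv h \<star> m \<star> h \<star> iv m"
proof -
  obtain m where m: "m \<in> N" "m \<omega> = w" using N_trans[OF \<omega> w] by blast
  have hS: "h \<in> carrier (Sym \<Omega>)" using h H_S by blast
  have nS: "n \<in> carrier (Sym \<Omega>)" using n N_S by blast
  have mS: "m \<in> carrier (Sym \<Omega>)" using m N_S by blast
  define u where "u = iv m \<star> h \<star> n \<star> m"
  have "u \<omega> = iv m ((h \<star> n) (m \<omega>))" unfolding u_def
    using hS nS mS \<omega> by (simp add: app_mul S.m_closed app_closed)
  hence "u \<omega> = \<omega>" using m fx app_inv[OF mS \<omega>] by simp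
  moreover have "u \<in> G" unfolding u_def using h H_G m n N_G G_sub
    by (meson subgroup.m_closed subgroup.m_inv_closed subsetD)
  ultimately have uH: "u \<in> H" using H_I by blast
  define v where "v = (iv h \<star> iv m \<star> h) \<star> n \<star> m"
  have vN: "v \<in> N" unfolding v_def
    using N_conj'[of h "iv m"] h H_G m n N_sub
    by (meson subgroup.m_closed subgroup.m_inv_closed subsetD)
  have "v = iv h \<star> u" unfolding u_def v_def using hS nS mS by (simp add: la)
  hence vH: "v \<in> H" using uH h H_sub by (simp add: subgroup.m_closed subgroup.m_inv_closed)
  have v1: "v = \<one>" using HN vH vN by blast
  have "n = iv (iv h \<star> iv m \<star> h) \<star> (v \<star> iv m)"
    unfolding v_def using hS nS mS by (simp add: la S.inv_mult_group)
  also have "\<dots> = iv h \<star> m \<star> h \<star> iv m" using v1 hS mS by (simp add: S.inv_mult_group S.m_assoc)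
  finally show ?thesis using m(1) by blast
qed

end


context L begin

lemma Hp_S: "Hp \<subseteq> carrier (Sym \<Omega>)" using Hp_H H_S by blast
lemma Hp_G: "Hp \<subseteq> G" using Hp_H H_G by blast
lemma finHp: "finite Hp" using finite_subset[OF Hp_S finS] .
lemma Hp_inv: "h \<in> Hp \<Longrightarrow> iv h \<in> Hp" by (rule subgroup.m_inv_closed[OF Hp_sub])
lemma Hp_mul: "g \<in> Hp \<Longrightarrow> h \<in> Hp \<Longrightarrow> g \<star> h \<in> Hp" by (rule subgroup.m_closed[OF Hp_sub])
lemma N_mul: "g \<in> N \<Longrightarrow> h \<in> N \<Longrightarrow> g \<star> h \<in> N" by (rule subgroup.m_closed[OF N_sub])
lemma N_inv: "g \<in> N \<Longrightarrow> iv g \<in> N" by (rule subgroup.m_inv_closed[OF N_sub])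
lemma N_one: "\<one> \<in> N" by (rule subgroup.one_closed[OF N_sub])

lemma fixed_coset:
  assumes As: "subgroup A (Sym \<Omega>)" and AN: "A \<subseteq> N" and AneN: "A \<noteq> N"
    and inv: "\<And>h a. h \<in> Hp \<Longrightarrow> a \<in> A \<Longrightarrow> h \<star> a \<star> iv h \<in> A"
  shows "\<exists>b\<in>N - A. \<forall>h\<in>Hp. h \<star> b \<star> iv h \<star> iv b \<in> A"
proof -
  define cos where "cos y = {a \<star> y | a. a \<in> A}" for y
  define E where "E = cos ` N"
  define act where "act h Y = (\<lambda>z. h \<star> z \<star> iv h) ` Y" for h Y
  have AS: "A \<subseteq> carrier (Sym \<Omega>)" using AN N_S by blast
  have conj_cos: "act h (cos y) = cos (h \<star> y \<star> iv h)" if h: "h \<in> Hp" and y: "y \<in> carrier (Sym \<Omega>)" for h y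
  proof
    have hS: "h \<in> carrier (Sym \<Omega>)" using h Hp_S by blast
    show "act h (cos y) \<subseteq> cos (h \<star> y \<star> iv h)"
    proof
      fix z assume "z \<in> act h (cos y)"
      then obtain a where a: "a \<in> A" "z = h \<star> (a \<star> y) \<star> iv h" unfolding act_def cos_def by blast
      have aS: "a \<in> carrier (Sym \<Omega>)" using a AS by blast
      have "z = (h \<star> a \<star> iv h) \<star> (h \<star> y \<star> iv h)" using a hS aS y by (simp add: la)
      thus "z \<in> cos (h \<star> y \<star> iv h)" unfolding cos_def using inv[OF h a(1)] by blast
    qed
    show "cos (h \<star> y \<star> iv h) \<subseteq> act h (cos y)"
    proof
      fix z assume "z \<in> cos (h \<star> y \<star> iv h)"
      then obtain a where a: "a \<in> A" "z = a \<star> (h \<star> y \<star> iv h)" unfolding cos_def by blast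
      have aS: "a \<in> carrier (Sym \<Omega>)" using a AS by blast
      have a2: "iv h \<star> a \<star> h \<in> A" using inv[OF Hp_inv[OF h] a(1)] hS by simp
      have "z = h \<star> ((iv h \<star> a \<star> h) \<star> y) \<star> iv h" using a hS aS y by (simp add: la)
      thus "z \<in> act h (cos y)" unfolding act_def cos_def using a2 by blast
    qed
  qed
  let ?Q = "(Sym \<Omega>)\<lparr>carrier := Hp\<rparr>"
  have grpQ: "group ?Q" using S.subgroup_imp_group Hp_sub by blast
  have cosS: "cos y \<subseteq> carrier (Sym \<Omega>)" if "y \<in> carrier (Sym \<Omega>)" for y
    using AS that unfolding cos_def by blast
  have finE: "finite E" unfolding E_def using finN by simp
  have closed: "act g x \<in> E" if gx: "g \<in> carrier ?Q" "x \<in> E" for g x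
  proof -
    obtain y where y: "y \<in> N" "x = cos y" using gx(2) E_def by blast
    have "act g x = cos (g \<star> y \<star> iv g)" using conj_cos gx(1) y N_S by auto
    moreover have "g \<star> y \<star> iv g \<in> N" using N_conj gx(1) Hp_G y(1) by auto
    ultimately show ?thesis unfolding E_def by blast
  qed
  have one: "act \<one>\<^bsub>?Q\<^esub> x = x" if x: "x \<in> E" for x
  proof -
    obtain y where y: "y \<in> N" "x = cos y" using x E_def by blast
    have "\<one> \<in> Hp" using Hp_sub subgroup.one_closed by blast
    thus ?thesis using conj_cos[of \<one> y] y N_S by auto
  qed
  have mult: "act (g \<otimes>\<^bsub>?Q\<^esub> h) x = act g (act h x)"
    if ghx: "g \<in> carrier ?Q" "h \<in> carrier ?Q" "x \<in> E" for g h x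
  proof -
    obtain y where y: "y \<in> N" "x = cos y" using ghx E_def by blast
    have gS: "g \<in> carrier (Sym \<Omega>)" "h \<in> carrier (Sym \<Omega>)" "y \<in> carrier (Sym \<Omega>)"
      using ghx Hp_S y N_S by auto
    have "act (g \<otimes>\<^bsub>?Q\<^esub> h) x = cos ((g \<star> h) \<star> y \<star> iv (g \<star> h))"
      using conj_cos[of "g \<star> h" y] Hp_mul ghx y gS by auto
    also have "\<dots> = cos (g \<star> (h \<star> y \<star> iv h) \<star> iv g)"
      using gS by (simp add: la S.inv_mult_group)
    also have "\<dots> = act g (act h x)"
      using conj_cos ghx y gS by (simp add: S.m_closed)
    finally show ?thesis .
  qed
  have dvdE: "p dvd card E"
  proof -
    let ?N = "(Sym \<Omega>)\<lparr>carrier := N\<rparr>"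
    have grpN: "group ?N" using S.subgroup_imp_group N_sub by blast
    have AsN: "subgroup A ?N" using S.subgroup_incl[OF As N_sub AN] .
    have rc: "A #>\<^bsub>?N\<^esub> y = cos y" for y
      unfolding r_coset_def cos_def by auto
    have "rcosets\<^bsub>?N\<^esub> A = E"
      unfolding RCOSETS_def E_def using rc by auto
    hence "card E * card A = p ^ k" using group.lagrange[OF grpN AsN] N_card by (simp add: order_def)
    hence "card E dvd p ^ k" by (metis dvd_triv_left)
    then obtain i where i: "card E = p ^ i" using divides_primepow_nat[OF p_prime] by blast
    have "i \<noteq> 0"
    proof
      assume "i = 0"
      hence "card A = card N" using \<open>card E * card A = p ^ k\<close> i N_card by simp
      hence "A = N" using card_subset_eq[OF finN AN] by simp
      thus False using AneN by simp
    qed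
    thus ?thesis using i by (simp add: dvd_power)
  qed
  have "p dvd card {x\<in>E. \<forall>g\<in>carrier ?Q. act g x = x}"
  proof -
    have f1: "finite (carrier ?Q)" using finHp by simp
    have f2: "card (carrier ?Q) = p ^ multiplicity p (card H)" using Hp_card by simp
    show ?thesis
      apply (rule pgroup_fix_dvd[OF grpQ f1 f2 p_prime finE])
      apply (erule (1) closed)
      apply (erule one)
      apply (erule (2) mult)
      by (rule dvdE)
  qed
  hence dvdF: "p dvd card {x\<in>E. \<forall>g\<in>Hp. act g x = x}" by simp
  define F where "F = {x\<in>E. \<forall>g\<in>Hp. act g x = x}"
  have cos1: "cos \<one> = A"
  proof
    show "cos \<one> \<subseteq> A"
    proof
      fix z assume "z \<in> cos \<one>" then obtain a where "a \<in> A" "z = a \<star> \<one>" unfolding cos_def by blast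
      thus "z \<in> A" using AS by (metis S.r_one subsetD)
    qed
    show "A \<subseteq> cos \<one>"
    proof
      fix z assume z: "z \<in> A" hence "z = z \<star> \<one>" using AS by (metis S.r_one subsetD)
      thus "z \<in> cos \<one>" using z unfolding cos_def by blast
    qed
  qed
  have AF: "A \<in> F"
  proof -
    have "cos \<one> \<in> E" unfolding E_def using N_one by (rule imageI)
    hence "A \<in> E" using cos1 by simp
    moreover have "act g A = A" if g: "g \<in> Hp" for g
    proof -
      have gS: "g \<in> carrier (Sym \<Omega>)" using g Hp_S by blast
      have "act g (cos \<one>) = cos (g \<star> \<one> \<star> iv g)" by (rule conj_cos[OF g S.one_closed])
      also have "g \<star> \<one> \<star> iv g = \<one>" using gS by simp
      finally show ?thesis using cos1 by simp
    qed
    ultimately show ?thesis unfolding F_def by blast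
  qed
  have "\<exists>Y\<in>F. Y \<noteq> A"
  proof (rule ccontr)
    assume "\<not> ?thesis"
    hence "F \<subseteq> {A}" by blast
    hence "card F \<le> card {A}" using card_mono[of "{A}" F] by simp
    hence "card F \<le> 1" by simp
    moreover have "finite F" unfolding F_def using finE by simp
    hence "card F \<noteq> 0" using AF by auto
    ultimately have "card F = 1" by simp
    hence "p dvd 1" using dvdF F_def by simp
    thus False using p_prime by simp
  qed
  then obtain Y where Y: "Y \<in> F" "Y \<noteq> A" by blast
  then obtain b where b: "b \<in> N" "Y = cos b" unfolding F_def E_def by blast
  have bS: "b \<in> carrier (Sym \<Omega>)" using b N_S by blast
  have bA: "b \<notin> A"
  proof
    assume bA: "b \<in> A"
    have "cos b = A"
    proof
      show "cos b \<subseteq> A"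
      proof
        fix z assume "z \<in> cos b"
        then obtain a where a: "a \<in> A" "z = a \<star> b" unfolding cos_def by blast
        thus "z \<in> A" using subgroup.m_closed[OF As a(1) bA] by simp
      qed
      show "A \<subseteq> cos b"
      proof
        fix a assume a: "a \<in> A"
        have aS: "a \<in> carrier (Sym \<Omega>)" using a AS by blast
        have "a = (a \<star> iv b) \<star> b" using aS bS by simp
        moreover have "a \<star> iv b \<in> A" using subgroup.m_closed[OF As a subgroup.m_inv_closed[OF As bA]] .
        ultimately show "a \<in> cos b" unfolding cos_def by blast
      qed
    qed
    thus False using Y b by simp
  qed
  have "h \<star> b \<star> iv h \<star> iv b \<in> A" if h: "h \<in> Hp" for h
  proof -
    have hS: "h \<in> carrier (Sym \<Omega>)" using h Hp_S by blast
    have "act h Y = Y" using Y(1) h unfolding F_def by blast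
    hence "cos (h \<star> b \<star> iv h) = cos b" using conj_cos[OF h bS] b(2) by simp
    moreover have "h \<star> b \<star> iv h \<in> cos (h \<star> b \<star> iv h)"
    proof -
      have "\<one> \<in> A" using As subgroup.one_closed by blast
      moreover have "h \<star> b \<star> iv h = \<one> \<star> (h \<star> b \<star> iv h)" using hS bS by simp
      ultimately show ?thesis unfolding cos_def by blast
    qed
    ultimately have "h \<star> b \<star> iv h \<in> cos b" by simp
    then obtain a where a: "a \<in> A" "h \<star> b \<star> iv h = a \<star> b" unfolding cos_def by blast
    have aS: "a \<in> carrier (Sym \<Omega>)" using a AS by blast
    have "h \<star> b \<star> iv h \<star> iv b = a" using a(2) aS bS by simp
    thus ?thesis using a by simp
  qed
  thus ?thesis using b bA by blast
qed

end


context L begin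

lemma N_nontriv: "\<exists>n\<in>N. n \<noteq> \<one>"
proof -
  have "card \<Omega> \<ge> 2" using two_trans by (simp add: two_transitive_on_def)
  hence "\<not> card \<Omega> \<le> Suc 0" by simp
  then obtain a b where ab: "a \<in> \<Omega>" "b \<in> \<Omega>" "a \<noteq> b"
    using card_le_Suc0_iff_eq[OF fin] by blast
  obtain n where n: "n \<in> N" "n a = b" using N_trans[OF ab(1,2)] by blast
  have "n \<noteq> \<one>" using n ab app_one by force
  thus ?thesis using n by blast
qed

lemma fixed_N: "\<exists>b\<in>N. b \<noteq> \<one> \<and> (\<forall>h\<in>Hp. h \<star> b = b \<star> h)"
proof -
  have s1: "subgroup {\<one>} (Sym \<Omega>)" by (rule S.triv_subgroup)
  have s2: "{\<one>} \<subseteq> N" using N_one by blast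
  have s3: "{\<one>} \<noteq> N" using N_nontriv by blast
  have s4: "h \<star> a \<star> iv h \<in> {\<one>}" if "h \<in> Hp" "a \<in> {\<one>}" for h a
    using that Hp_S by auto
  obtain b where b: "b \<in> N - {\<one>}" "\<forall>h\<in>Hp. h \<star> b \<star> iv h \<star> iv b \<in> {\<one>}"
    using fixed_coset[OF s1 s2 s3 s4] by blast
  have bS: "b \<in> carrier (Sym \<Omega>)" using b N_S by blast
  have "h \<star> b = b \<star> h" if h: "h \<in> Hp" for h
  proof -
    have hS: "h \<in> carrier (Sym \<Omega>)" using h Hp_S by blast
    have e: "h \<star> b \<star> iv h \<star> iv b = \<one>" using b h by blast
    have "h \<star> b \<star> iv h = h \<star> b \<star> iv h \<star> iv b \<star> b" using hS bS by simp
    also have "\<dots> = b" using e bS by simp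
    finally have e2: "h \<star> b \<star> iv h = b" .
    have "h \<star> b = h \<star> b \<star> iv h \<star> h" using hS bS by simp
    also have "\<dots> = b \<star> h" using e2 by simp
    finally show ?thesis .
  qed
  thus ?thesis using b by blast
qed

lemma comm_gen_form:
  assumes n: "n \<in> N" and h: "h \<in> G"
  shows "iv n \<star> iv h \<star> n \<star> h = iv h \<star> n \<star> h \<star> iv n"
proof -
  have hS: "h \<in> carrier (Sym \<Omega>)" using h G_sub' by blast
  have nS: "n \<in> carrier (Sym \<Omega>)" using n N_S by blast
  have u: "iv h \<star> n \<star> h \<in> N" using N_conj'[OF h n] .
  have "iv n \<star> iv h \<star> n \<star> h = iv n \<star> (iv h \<star> n \<star> h)" using hS nS by (simp add: la)
  also have "\<dots> = (iv h \<star> n \<star> h) \<star> iv n" using N_comm[OF N_inv[OF n] u] .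
  finally show ?thesis .
qed

definition gens where "gens = {iv n \<star> iv h \<star> n \<star> h | n h. n \<in> N \<and> h \<in> Hp}"

lemma M_def': "commutator_subgroup \<Omega> N Hp = generate (Sym \<Omega>) gens"
  unfolding commutator_subgroup_def gens_def by simp

lemma deranged_part:
  assumes t: "t \<in> Hp" and z: "z \<in> N" and zM: "z \<notin> commutator_subgroup \<Omega> N Hp"
  shows "derangement \<Omega> (t \<star> z)"
  unfolding derangement_def
proof
  fix w assume w: "w \<in> \<Omega>"
  show "(t \<star> z) w \<noteq> w"
  proof
    assume fx: "(t \<star> z) w = w"
    obtain m where m: "m \<in> N" "z = iv t \<star> m \<star> t \<star> iv m"
      using fix_char[OF _ z w fx] t Hp_H by blast
    have "z = iv m \<star> iv t \<star> m \<star> t" using m comm_gen_form[OF m(1)] t Hp_G by auto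
    hence "z \<in> gens" unfolding gens_def using m(1) t by blast
    hence "z \<in> commutator_subgroup \<Omega> N Hp" unfolding M_def' by (rule generate.incl)
    thus False using zM by simp
  qed
qed

lemma comm_proper: "commutator_subgroup \<Omega> N Hp \<subset> N"
proof -
  define \<A> where "\<A> = {A. subgroup A (Sym \<Omega>) \<and> A \<subseteq> N \<and> A \<noteq> N \<and> (\<forall>h\<in>Hp. \<forall>a\<in>A. h \<star> a \<star> iv h \<in> A)}"
  have fA: "finite \<A>"
  proof -
    have "\<A> \<subseteq> Pow N" unfolding \<A>_def by blast
    thus ?thesis using finN by (simp add: finite_subset)
  qed
  have "{\<one>} \<in> \<A>" unfolding \<A>_def using S.triv_subgroup N_one N_nontriv Hp_S by auto
  hence neA: "\<A> \<noteq> {}" by blast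
  obtain A0 where A0: "A0 \<in> \<A>" and maxA: "\<forall>B\<in>\<A>. A0 \<subseteq> B \<longrightarrow> A0 = B"
    using finite_has_maximal[OF fA neA] by blast
  have A0s: "subgroup A0 (Sym \<Omega>)" and A0N: "A0 \<subseteq> N" and A0ne: "A0 \<noteq> N"
    and A0i: "\<And>h a. h \<in> Hp \<Longrightarrow> a \<in> A0 \<Longrightarrow> h \<star> a \<star> iv h \<in> A0"
    using A0 unfolding \<A>_def by auto
  have A0S: "A0 \<subseteq> carrier (Sym \<Omega>)" using A0N N_S by blast
  obtain b where b: "b \<in> N - A0" "\<forall>h\<in>Hp. h \<star> b \<star> iv h \<star> iv b \<in> A0"
    using fixed_coset[OF A0s A0N A0ne A0i] by blast
  define Sb where "Sb = {y\<in>N. \<forall>h\<in>Hp. h \<star> y \<star> iv h \<star> iv y \<in> A0}"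
  have A0m: "x \<star> y \<in> A0" if "x \<in> A0" "y \<in> A0" for x y using subgroup.m_closed[OF A0s that] .
  have A0v: "iv x \<in> A0" if "x \<in> A0" for x using subgroup.m_inv_closed[OF A0s that] .
  have SbS: "Sb \<subseteq> carrier (Sym \<Omega>)" unfolding Sb_def using N_S by blast
  have Sb1: "\<one> \<in> Sb" unfolding Sb_def using N_one Hp_S subgroup.one_closed[OF A0s] by auto
  have Sbv: "iv y \<in> Sb" if y: "y \<in> Sb" for y
  proof -
    have yN: "y \<in> N" using y Sb_def by blast
    have yS: "y \<in> carrier (Sym \<Omega>)" using yN N_S by blast
    have "h \<star> iv y \<star> iv h \<star> iv (iv y) \<in> A0" if h: "h \<in> Hp" for h
    proof -
      have hS: "h \<in> carrier (Sym \<Omega>)" using h Hp_S by blast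
      have c: "h \<star> y \<star> iv h \<star> iv y \<in> A0" using y h Sb_def by blast
      have u: "h \<star> iv y \<star> iv h \<in> N" using N_conj h Hp_G N_inv[OF yN] by blast
      have "h \<star> iv y \<star> iv h \<star> iv (iv y) = (h \<star> iv y \<star> iv h) \<star> y" using yS by simp
      also have "\<dots> = y \<star> (h \<star> iv y \<star> iv h)" using N_comm[OF u yN] .
      also have "\<dots> = iv (h \<star> y \<star> iv h \<star> iv y)" using hS yS by (simp add: la S.inv_mult_group)
      finally show ?thesis using A0v[OF c] by simp
    qed
    thus ?thesis unfolding Sb_def using N_inv[OF yN] by blast
  qed
  have Sbm: "y1 \<star> y2 \<in> Sb" if y1: "y1 \<in> Sb" and y2: "y2 \<in> Sb" for y1 y2
  proof -
    have yN: "y1 \<in> N" "y2 \<in> N" using y1 y2 Sb_def by auto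
    have yS: "y1 \<in> carrier (Sym \<Omega>)" "y2 \<in> carrier (Sym \<Omega>)" using yN N_S by auto
    have "h \<star> (y1 \<star> y2) \<star> iv h \<star> iv (y1 \<star> y2) \<in> A0" if h: "h \<in> Hp" for h
    proof -
      have hS: "h \<in> carrier (Sym \<Omega>)" using h Hp_S by blast
      have c1: "h \<star> y1 \<star> iv h \<star> iv y1 \<in> A0" using y1 h Sb_def by blast
      have c2: "h \<star> y2 \<star> iv h \<star> iv y2 \<in> A0" using y2 h Sb_def by blast
      have c2N: "h \<star> y2 \<star> iv h \<star> iv y2 \<in> N" using c2 A0N by blast
      have "h \<star> (y1 \<star> y2) \<star> iv h \<star> iv (y1 \<star> y2)
          = (h \<star> y1 \<star> iv h \<star> iv y1) \<star> (y1 \<star> (h \<star> y2 \<star> iv h \<star> iv y2) \<star> iv y1)"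
        using hS yS by (simp add: la S.inv_mult_group)
      also have "y1 \<star> (h \<star> y2 \<star> iv h \<star> iv y2) = (h \<star> y2 \<star> iv h \<star> iv y2) \<star> y1"
        using N_comm[OF yN(1) c2N] .
      finally show ?thesis using A0m[OF c1 c2] hS yS by (simp add: la)
    qed
    thus ?thesis unfolding Sb_def using N_mul[OF yN] by blast
  qed
  have Sbs: "subgroup Sb (Sym \<Omega>)"
    by (rule S.subgroupI[OF SbS]) (use Sb1 Sbv Sbm in auto)
  have SbN: "Sb \<subseteq> N" unfolding Sb_def by blast
  have A0Sb: "A0 \<subseteq> Sb"
  proof
    fix a assume a: "a \<in> A0"
    have "h \<star> a \<star> iv h \<star> iv a \<in> A0" if "h \<in> Hp" for h using A0m[OF A0i[OF that a] A0v[OF a]] .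
    thus "a \<in> Sb" unfolding Sb_def using a A0N by blast
  qed
  have bSb: "b \<in> Sb" unfolding Sb_def using b by blast
  have Sbi: "g \<star> y \<star> iv g \<in> Sb" if g: "g \<in> Hp" and y: "y \<in> Sb" for g y
  proof -
    have yN: "y \<in> N" using y Sb_def by blast
    have yS: "y \<in> carrier (Sym \<Omega>)" using yN N_S by blast
    have gS: "g \<in> carrier (Sym \<Omega>)" using g Hp_S by blast
    have "h \<star> (g \<star> y \<star> iv g) \<star> iv h \<star> iv (g \<star> y \<star> iv g) \<in> A0" if h: "h \<in> Hp" for h
    proof -
      have hS: "h \<in> carrier (Sym \<Omega>)" using h Hp_S by blast
      have c1: "(h \<star> g) \<star> y \<star> iv (h \<star> g) \<star> iv y \<in> A0" using y Hp_mul[OF h g] Sb_def by blast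
      have c2: "g \<star> y \<star> iv g \<star> iv y \<in> A0" using y g Sb_def by blast
      have "h \<star> (g \<star> y \<star> iv g) \<star> iv h \<star> iv (g \<star> y \<star> iv g)
          = ((h \<star> g) \<star> y \<star> iv (h \<star> g) \<star> iv y) \<star> iv (g \<star> y \<star> iv g \<star> iv y)"
        using hS gS yS by (simp add: la S.inv_mult_group)
      thus ?thesis using A0m[OF c1 A0v[OF c2]] by simp
    qed
    moreover have "g \<star> y \<star> iv g \<in> N" using N_conj g Hp_G yN by blast
    ultimately show ?thesis unfolding Sb_def by blast
  qed
  have SbeqN: "Sb = N"
  proof (rule ccontr)
    assume "Sb \<noteq> N"
    hence "Sb \<in> \<A>" unfolding \<A>_def using Sbs SbN Sbi by blast
    hence "A0 = Sb" using maxA A0Sb by blast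
    thus False using b bSb by blast
  qed
  have gA: "gens \<subseteq> A0"
  proof
    fix x assume "x \<in> gens"
    then obtain n h where nh: "n \<in> N" "h \<in> Hp" "x = iv n \<star> iv h \<star> n \<star> h" unfolding gens_def by blast
    have hS: "h \<in> carrier (Sym \<Omega>)" using nh Hp_S by blast
    have "x = iv h \<star> n \<star> h \<star> iv n" using comm_gen_form[OF nh(1)] nh Hp_G by auto
    also have "\<dots> = iv h \<star> n \<star> iv (iv h) \<star> iv n" using hS by simp
    finally have "x = iv h \<star> n \<star> iv (iv h) \<star> iv n" .
    moreover have "n \<in> Sb" using SbeqN nh by simp
    ultimately show "x \<in> A0" using Hp_inv[OF nh(2)] Sb_def by blast
  qed
  have "commutator_subgroup \<Omega> N Hp \<subseteq> A0"
    unfolding M_def' by (rule S.generate_subgroup_incl[OF gA A0s])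
  thus ?thesis using A0N A0ne by blast
qed

end


context L begin

lemma sub_pow: "subgroup K (Sym \<Omega>) \<Longrightarrow> x \<in> K \<Longrightarrow> x [^]\<^bsub>Sym \<Omega>\<^esub> (n::nat) \<in> K"
  by (induction n) (auto simp: subgroup.one_closed subgroup.m_closed)

lemma sub_pow_card:
  assumes K: "subgroup K (Sym \<Omega>)" and x: "x \<in> K"
  shows "x [^]\<^bsub>Sym \<Omega>\<^esub> card K = \<one>"
proof -
  have g: "group ((Sym \<Omega>)\<lparr>carrier := K\<rparr>)" using S.subgroup_imp_group[OF K] .
  have "x [^]\<^bsub>(Sym \<Omega>)\<lparr>carrier := K\<rparr>\<^esub> order ((Sym \<Omega>)\<lparr>carrier := K\<rparr>) = \<one>\<^bsub>(Sym \<Omega>)\<lparr>carrier := K\<rparr>\<^esub>"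
    using group.pow_order_eq_1[OF g] x by simp
  thus ?thesis using S.nat_pow_consistent[of x "card K" K] by (simp add: order_def)
qed

lemma conj_pow:
  assumes c: "c \<in> carrier (Sym \<Omega>)" and t: "t \<in> carrier (Sym \<Omega>)"
  shows "(c \<star> t \<star> iv c) [^]\<^bsub>Sym \<Omega>\<^esub> (n::nat) = c \<star> (t [^]\<^bsub>Sym \<Omega>\<^esub> n) \<star> iv c"
proof (induction n)
  case 0 thus ?case using c by simp
next
  case (Suc n)
  have tn: "t [^]\<^bsub>Sym \<Omega>\<^esub> n \<in> carrier (Sym \<Omega>)" using t by simp
  show ?case using Suc c t tn by (simp add: la)
qed

lemma exists_order_p: "\<exists>t\<in>Hp. t \<noteq> \<one> \<and> t [^]\<^bsub>Sym \<Omega>\<^esub> p = \<one>"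
proof -
  have "\<one> \<in> Hp" using subgroup.one_closed[OF Hp_sub] .
  then obtain t1 where t1: "t1 \<in> Hp" "t1 \<noteq> \<one>" using Hp_nontriv by blast
  have t1S: "t1 \<in> carrier (Sym \<Omega>)" using t1 Hp_S by blast
  define m where "m = multiplicity p (card H)"
  have "t1 [^]\<^bsub>Sym \<Omega>\<^esub> (p ^ m) = \<one>" using sub_pow_card[OF Hp_sub t1(1)] Hp_card m_def by simp
  hence ex: "\<exists>j. t1 [^]\<^bsub>Sym \<Omega>\<^esub> (p ^ j) = \<one>" by blast
  define j where "j = (LEAST j. t1 [^]\<^bsub>Sym \<Omega>\<^esub> (p ^ j) = \<one>)"
  have j1: "t1 [^]\<^bsub>Sym \<Omega>\<^esub> (p ^ j) = \<one>" unfolding j_def using LeastI_ex[OF ex] .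
  have j0: "j \<noteq> 0"
  proof
    assume "j = 0" thus False using j1 t1 t1S by simp
  qed
  define t where "t = t1 [^]\<^bsub>Sym \<Omega>\<^esub> (p ^ (j - 1))"
  have "t \<noteq> \<one>"
  proof
    assume "t = \<one>"
    hence "j \<le> j - 1" unfolding j_def t_def by (rule Least_le)
    thus False using j0 by simp
  qed
  moreover have "t [^]\<^bsub>Sym \<Omega>\<^esub> p = \<one>"
  proof -
    have "t [^]\<^bsub>Sym \<Omega>\<^esub> p = t1 [^]\<^bsub>Sym \<Omega>\<^esub> (p ^ (j - 1) * p)"
      unfolding t_def using S.nat_pow_pow[OF t1S] by simp
    also have "p ^ (j - 1) * p = p ^ j" using j0 by (metis Suc_pred' neq0_conv power_Suc2)
    finally show ?thesis using j1 by simp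
  qed
  moreover have "t \<in> Hp" unfolding t_def using sub_pow[OF Hp_sub t1(1)] .
  ultimately show ?thesis by blast
qed

lemma H_trans:
  assumes x: "x \<in> N" "x \<noteq> \<one>" and y: "y \<in> N" "y \<noteq> \<one>"
  shows "\<exists>g\<in>H. g \<star> x \<star> iv g = y"
proof -
  have xS: "x \<in> carrier (Sym \<Omega>)" and yS: "y \<in> carrier (Sym \<Omega>)" using x y N_S by auto
  have xw: "x \<omega> \<in> \<Omega>" "y \<omega> \<in> \<Omega>" using app_closed xS yS \<omega> by auto
  have "x \<omega> \<noteq> \<omega>" using N_reg x \<omega> by blast
  moreover have "y \<omega> \<noteq> \<omega>" using N_reg y \<omega> by blast
  ultimately obtain g where g: "g \<in> G" "g \<omega> = \<omega>" "g (x \<omega>) = y \<omega>"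
    using two_trans \<omega> xw unfolding two_transitive_on_def by metis
  have gH: "g \<in> H" using H_I g by blast
  have gS: "g \<in> carrier (Sym \<Omega>)" using g G_sub' by blast
  define u where "u = g \<star> x \<star> iv g"
  have uN: "u \<in> N" unfolding u_def using N_conj g(1) x(1) by blast
  have uS: "u \<in> carrier (Sym \<Omega>)" using uN N_S by blast
  have ig: "iv g \<omega> = \<omega>" using app_inv[OF gS \<omega>] g(2) by simp
  have "u \<omega> = g (x (iv g \<omega>))" unfolding u_def using gS xS \<omega> by (simp add: app_mul app_closed)
  hence uw: "u \<omega> = y \<omega>" using ig g(3) by simp
  have "(iv y \<star> u) \<omega> = \<omega>" using uw app_inv[OF yS \<omega>] yS uS \<omega> by (simp add: app_mul)
  hence "iv y \<star> u = \<one>" using N_reg[OF N_mul[OF N_inv[OF y(1)] uN] \<omega>] by blast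
  hence "u = y" using yS uS by (metis S.inv_equality S.inv_inv S.inv_closed)
  thus ?thesis using gH u_def by blast
qed

end


context L begin

lemma conj_eq_iff:
  assumes g: "g \<in> carrier (Sym \<Omega>)" and x: "x \<in> carrier (Sym \<Omega>)"
  shows "(g \<star> x \<star> iv g = x) \<longleftrightarrow> (g \<star> x = x \<star> g)"
proof
  assume e: "g \<star> x \<star> iv g = x"
  have "g \<star> x = g \<star> x \<star> iv g \<star> g" using g x by simp
  thus "g \<star> x = x \<star> g" using e by simp
next
  assume e: "g \<star> x = x \<star> g"
  thus "g \<star> x \<star> iv g = x" using g x by simp
qed

lemma G_mul: "g \<in> G \<Longrightarrow> h \<in> G \<Longrightarrow> g \<star> h \<in> G" by (rule subgroup.m_closed[OF G_sub])

lemma key: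
  assumes kap: "kappa \<Omega> G = 2" and t: "t \<in> Hp" "t \<noteq> \<one>"
    and h: "h \<in> H" "h \<noteq> \<one>" and y: "y \<in> N" "y \<noteq> \<one>" "h \<star> y = y \<star> h"
  shows "\<exists>c\<in>H. h = c \<star> t \<star> iv c"
proof -
  have hS: "h \<in> carrier (Sym \<Omega>)" using h H_S by blast
  have yS: "y \<in> carrier (Sym \<Omega>)" using y N_S by blast
  have hG: "h \<in> G" using h H_G by blast
  have tH: "t \<in> H" using t Hp_H by blast
  have tG: "t \<in> G" using tH H_G by blast
  have tS: "t \<in> carrier (Sym \<Omega>)" using tG G_sub' by blast
  define \<phi> where "\<phi> m = iv h \<star> m \<star> h \<star> iv m" for m
  have \<phi>N: "\<phi> ` N \<subseteq> N"
  proof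
    fix z assume "z \<in> \<phi> ` N"
    then obtain m where m: "m \<in> N" "z = \<phi> m" by blast
    show "z \<in> N" unfolding m(2) \<phi>_def using N_mul[OF N_conj'[OF hG m(1)] N_inv[OF m(1)]] .
  qed
  have \<phi>1: "\<phi> \<one> = \<one>" unfolding \<phi>_def using hS by simp
  have \<phi>y: "\<phi> y = \<one>"
  proof -
    have "iv h \<star> y \<star> h = iv h \<star> (y \<star> h)" using hS yS by (simp add: S.m_assoc)
    also have "\<dots> = iv h \<star> (h \<star> y)" using y(3) by simp
    also have "\<dots> = y" using hS yS by (simp add: la)
    finally show ?thesis unfolding \<phi>_def using yS by simp
  qed
  have "\<not> inj_on \<phi> N"
  proof
    assume inj: "inj_on \<phi> N"
    have "\<phi> y = \<phi> \<one>" using \<phi>1 \<phi>y by simp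
    from inj_onD[OF inj this y(1) N_one] show False using y(2) by simp
  qed
  hence "card (\<phi> ` N) \<noteq> card N" using inj_on_iff_eq_card[OF finN] by blast
  hence "\<phi> ` N \<noteq> N" by auto
  then obtain n where n: "n \<in> N" "n \<notin> \<phi> ` N" using \<phi>N by blast
  have nS: "n \<in> carrier (Sym \<Omega>)" using n N_S by blast
  define D where "D = h \<star> n"
  have Dder: "derangement \<Omega> D"
    unfolding derangement_def
  proof
    fix w assume w: "w \<in> \<Omega>"
    show "D w \<noteq> w"
    proof
      assume "D w = w"
      then obtain m where mm: "m \<in> N" "n = iv h \<star> m \<star> h \<star> iv m"
        using fix_char[OF h(1) n(1) w] D_def by blast
      have "n = \<phi> m" unfolding \<phi>_def using mm(2) .
      hence "n \<in> \<phi> ` N" using mm(1) by blast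
      thus False using n by simp
    qed
  qed
  have DG: "D \<in> G" unfolding D_def using G_mul[OF hG] n N_G by blast
  have DN: "D \<notin> N"
  proof
    assume "D \<in> N"
    hence "D \<star> iv n \<in> N" using N_mul N_inv n by simp
    moreover have "D \<star> iv n = h" unfolding D_def using hS nS by simp
    ultimately show False using HN h by blast
  qed
  obtain z where z: "z \<in> N" "z \<notin> commutator_subgroup \<Omega> N Hp" using comm_proper by blast
  have zS: "z \<in> carrier (Sym \<Omega>)" using z N_S by blast
  define T where "T = t \<star> z"
  have Tder: "derangement \<Omega> T" unfolding T_def using deranged_part[OF t(1) z] .
  have TG: "T \<in> G" unfolding T_def using G_mul[OF tG] z N_G by blast
  have TN: "T \<notin> N"
  proof
    assume "T \<in> N"
    hence "T \<star> iv z \<in> N" using N_mul N_inv z by simp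
    moreover have "T \<star> iv z = t" unfolding T_def using tS zS by simp
    ultimately show False using HN tH t by blast
  qed
  obtain x0 where x0: "x0 \<in> N" "x0 \<noteq> \<one>" using N_nontriv by blast
  have x0der: "derangement \<Omega> x0" unfolding derangement_def using N_reg x0 by blast
  have x0G: "x0 \<in> G" using x0 N_G by blast
  define K where "K = {conj_class \<Omega> G g | g. g \<in> G \<and> derangement \<Omega> g}"
  have cK: "card K = 2" using kap unfolding kappa_def K_def .
  hence finK: "finite K" by (metis card.infinite zero_neq_numeral)
  have one_G: "\<one> \<in> G" using subgroup.one_closed[OF G_sub] .
  have self_in: "g \<in> conj_class \<Omega> G g" if "g \<in> G" for g
  proof -
    have gS: "g \<in> carrier (Sym \<Omega>)" using that G_sub' by blast
    have "g = \<one> \<star> g \<star> iv \<one>" using gS by simp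
    thus ?thesis unfolding conj_class_def using one_G by blast
  qed
  have cx: "conj_class \<Omega> G x0 \<subseteq> N" unfolding conj_class_def using N_conj x0 by blast
  have inK: "conj_class \<Omega> G x0 \<in> K" "conj_class \<Omega> G T \<in> K" "conj_class \<Omega> G D \<in> K"
    unfolding K_def using x0G x0der TG Tder DG Dder by blast+
  have ne1: "conj_class \<Omega> G x0 \<noteq> conj_class \<Omega> G T" using cx self_in[OF TG] TN by blast
  have ne2: "conj_class \<Omega> G x0 \<noteq> conj_class \<Omega> G D" using cx self_in[OF DG] DN by blast
  have eqTD: "conj_class \<Omega> G T = conj_class \<Omega> G D"
  proof (rule ccontr)
    assume ne3: "conj_class \<Omega> G T \<noteq> conj_class \<Omega> G D"
    have "card {conj_class \<Omega> G x0, conj_class \<Omega> G T, conj_class \<Omega> G D} = 3"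
      using ne1 ne2 ne3 by simp
    moreover have "card {conj_class \<Omega> G x0, conj_class \<Omega> G T, conj_class \<Omega> G D} \<le> card K"
      by (rule card_mono[OF finK]) (use inK in blast)
    ultimately show False using cK by simp
  qed
  hence "D \<in> conj_class \<Omega> G T" using self_in[OF DG] by simp
  then obtain k where k: "k \<in> G" "D = k \<star> T \<star> iv k" unfolding conj_class_def by blast
  obtain c a where ca: "c \<in> H" "a \<in> N" "k = c \<star> a" using decomp[OF k(1)] by blast
  have cS: "c \<in> carrier (Sym \<Omega>)" using ca H_S by blast
  have cG: "c \<in> G" using ca H_G by blast
  have aS: "a \<in> carrier (Sym \<Omega>)" using ca N_S by blast
  define u where "u = c \<star> t \<star> iv c"
  have uH: "u \<in> H" unfolding u_def using ca(1) tH H_sub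
    by (simp add: subgroup.m_closed subgroup.m_inv_closed)
  have uS: "u \<in> carrier (Sym \<Omega>)" using uH H_S by blast
  define q where "q = iv u \<star> h"
  have qH: "q \<in> H" unfolding q_def using uH h H_sub
    by (simp add: subgroup.m_closed subgroup.m_inv_closed)
  have hD: "h = c \<star> a \<star> (t \<star> z) \<star> iv (c \<star> a) \<star> iv n"
  proof -
    have "h = D \<star> iv n" unfolding D_def using hS nS by simp
    thus ?thesis using k(2) ca(3) T_def by simp
  qed
  have "q = c \<star> ((iv t \<star> a \<star> t) \<star> z \<star> iv a) \<star> iv c \<star> iv n"
    unfolding q_def u_def using hD cS aS tS zS nS by (simp add: la S.inv_mult_group)
  moreover have "(iv t \<star> a \<star> t) \<star> z \<star> iv a \<in> N"
    using N_mul[OF N_mul[OF N_conj'[OF tG ca(2)] z(1)] N_inv[OF ca(2)]] .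
  ultimately have "q \<in> N" using N_conj[OF cG] N_mul N_inv n by simp
  hence "q = \<one>" using HN qH by blast
  hence "h = u" unfolding q_def using hS uS by (metis S.inv_equality S.inv_inv S.inv_closed)
  thus ?thesis using ca(1) u_def by blast
qed

end


lemma only_p_power:
  fixes n p :: nat
  assumes n: "n \<noteq> 0" and pp: "Factorial_Ring.prime p" and only: "\<And>q. Factorial_Ring.prime q \<Longrightarrow> q dvd n \<Longrightarrow> q = p"
  shows "n = p ^ multiplicity p n"
proof -
  have np: "\<not> is_unit p" using prime_gt_1_nat[OF pp] by simp
  obtain r where r: "n = p ^ multiplicity p n * r" "\<not> p dvd r"
    by (rule multiplicity_decompose'[of n p]) (use n np in auto)
  have "r = 1"
  proof (rule ccontr)
    assume "r \<noteq> 1"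
    then obtain q where q: "Factorial_Ring.prime q" "q dvd r" using prime_factor_nat by blast
    have "q dvd p ^ multiplicity p n * r" using q(2) by (rule dvd_mult)
    hence "q dvd n" using r(1)[symmetric] by simp
    hence "q = p" using only q(1) by blast
    thus False using q(2) r(2) by simp
  qed
  thus ?thesis using r(1) by simp
qed

context L begin

lemma part_ii:
  assumes kap: "kappa \<Omega> G = 2" and x: "x \<in> N - {\<one>}"
  shows "(\<forall>h\<in>Hp. h [^]\<^bsub>Sym \<Omega>\<^esub> p = \<one>) \<and>
         (\<exists>t\<in>Hp - {\<one>}. Hp - {\<one>} \<subseteq> conj_class \<Omega> H t) \<and>
         (\<exists>b\<ge>1. card (centraliser \<Omega> H x) = p ^ b \<and> card H = (p ^ k - 1) * p ^ b)"
proof -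
  obtain t where t: "t \<in> Hp" "t \<noteq> \<one>" "t [^]\<^bsub>Sym \<Omega>\<^esub> p = \<one>" using exists_order_p by blast
  have tS: "t \<in> carrier (Sym \<Omega>)" using t Hp_S by blast
  obtain b0 where b0: "b0 \<in> N" "b0 \<noteq> \<one>" "\<forall>h\<in>Hp. h \<star> b0 = b0 \<star> h" using fixed_N by blast
  have pw: "g [^]\<^bsub>Sym \<Omega>\<^esub> p = \<one>" if gc: "g \<in> H" "\<exists>c\<in>H. g = c \<star> t \<star> iv c" for g
  proof -
    obtain c where c: "c \<in> H" "g = c \<star> t \<star> iv c" using gc by blast
    have cS: "c \<in> carrier (Sym \<Omega>)" using c H_S by blast
    show ?thesis using conj_pow[OF cS tS, of p] t(3) c(2) cS by simp
  qed
  have HpC: "\<exists>c\<in>H. h = c \<star> t \<star> iv c" if h: "h \<in> Hp" "h \<noteq> \<one>" for h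
    using key[OF kap t(1,2) _ h(2) b0(1,2)] h Hp_H b0(3) by blast
  have P1: "\<forall>h\<in>Hp. h [^]\<^bsub>Sym \<Omega>\<^esub> p = \<one>"
  proof
    fix h assume h: "h \<in> Hp"
    show "h [^]\<^bsub>Sym \<Omega>\<^esub> p = \<one>"
    proof (cases "h = \<one>")
      case True thus ?thesis by simp
    next
      case False thus ?thesis using pw HpC h Hp_H by blast
    qed
  qed
  have P2: "Hp - {\<one>} \<subseteq> conj_class \<Omega> H t"
  proof
    fix h assume "h \<in> Hp - {\<one>}"
    then obtain c where "c \<in> H" "h = c \<star> t \<star> iv c" using HpC by blast
    thus "h \<in> conj_class \<Omega> H t" unfolding conj_class_def by blast
  qed
  define C where "C = centraliser \<Omega> H x"
  have xN: "x \<in> N" and x1: "x \<noteq> \<one>" using x by auto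
  have xS: "x \<in> carrier (Sym \<Omega>)" using xN N_S by blast
  have C_def': "C = {h \<in> H. h \<star> x = x \<star> h}" unfolding C_def centraliser_def by simp
  have CH: "C \<subseteq> H" unfolding C_def' by blast
  have finC: "finite C" using finite_subset[OF CH finH] .
  have Cs: "subgroup C (Sym \<Omega>)"
  proof (rule S.subgroupI)
    show "C \<subseteq> carrier (Sym \<Omega>)" using CH H_S by blast
    have "\<one> \<in> H" using subgroup.one_closed[OF H_sub] .
    thus "C \<noteq> {}" unfolding C_def' using xS by auto
  next
    fix a assume a: "a \<in> C"
    have aH: "a \<in> H" and e: "a \<star> x = x \<star> a" using a C_def' by auto
    have aS: "a \<in> carrier (Sym \<Omega>)" using aH H_S by blast
    have "iv a \<star> x = iv a \<star> (x \<star> a) \<star> iv a" using aS xS by (simp add: la)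
    also have "\<dots> = iv a \<star> (a \<star> x) \<star> iv a" using e by simp
    also have "\<dots> = x \<star> iv a" using aS xS by (simp add: la)
    finally show "iv a \<in> C" unfolding C_def' using subgroup.m_inv_closed[OF H_sub aH] by blast
  next
    fix a b assume a: "a \<in> C" and b: "b \<in> C"
    have aH: "a \<in> H" and ea: "a \<star> x = x \<star> a" using a C_def' by auto
    have bH: "b \<in> H" and eb: "b \<star> x = x \<star> b" using b C_def' by auto
    have aS: "a \<in> carrier (Sym \<Omega>)" using aH H_S by blast
    have bS: "b \<in> carrier (Sym \<Omega>)" using bH H_S by blast
    have "a \<star> b \<star> x = a \<star> (b \<star> x)" using aS bS xS by (simp add: S.m_assoc)
    also have "\<dots> = a \<star> (x \<star> b)" using eb by simp
    also have "\<dots> = (a \<star> x) \<star> b" using aS bS xS by (simp add: S.m_assoc)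
    also have "\<dots> = (x \<star> a) \<star> b" using ea by simp
    also have "\<dots> = x \<star> (a \<star> b)" using aS bS xS by (simp add: S.m_assoc)
    finally show "a \<star> b \<in> C" unfolding C_def' using subgroup.m_closed[OF H_sub aH bH] by blast
  qed
  have Cp: "g [^]\<^bsub>Sym \<Omega>\<^esub> p = \<one>" if g: "g \<in> C" for g
  proof (cases "g = \<one>")
    case True thus ?thesis by simp
  next
    case False
    have gH: "g \<in> H" and e: "g \<star> x = x \<star> g" using g C_def' by auto
    show ?thesis using pw[OF gH key[OF kap t(1,2) gH False xN x1 e]] .
  qed
  have C0: "card C \<noteq> 0"
  proof -
    have "\<one> \<in> C" using subgroup.one_closed[OF Cs] .
    thus ?thesis using finC by auto
  qed
  have only: "q = p" if q: "Factorial_Ring.prime q" "q dvd card C" for q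
  proof (rule ccontr)
    assume qp: "q \<noteq> p"
    define a where "a = multiplicity q (card C)"
    obtain m' where m': "card C = q ^ a * m'" using multiplicity_dvd[of q "card C"] a_def by (metis dvdE)
    have nq: "\<not> is_unit q" using prime_gt_1_nat[OF q(1)] by simp
    have a1: "a \<ge> 1" using q(2) multiplicity_gt_zero_iff[OF C0 nq] a_def by simp
    have grpC: "group ((Sym \<Omega>)\<lparr>carrier := C\<rparr>)" using S.subgroup_imp_group[OF Cs] .
    obtain P where P: "subgroup P ((Sym \<Omega>)\<lparr>carrier := C\<rparr>)" "card P = q ^ a"
      using sylow_thm[OF q(1) grpC _ ] m' finC by (auto simp: order_def)
    have Ps: "subgroup P (Sym \<Omega>)" using S.incl_subgroup[OF Cs P(1)] .
    have PC: "P \<subseteq> C" using P(1) subgroup.subset by fastforce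
    have "\<exists>g\<in>P. g \<noteq> \<one>"
    proof (rule ccontr)
      assume "\<not> ?thesis"
      hence "P \<subseteq> {\<one>}" by blast
      hence "card P \<le> 1" using card_mono[of "{\<one>}" P] by simp
      moreover have "q ^ a \<ge> q" using a1 q(1) by (metis One_nat_def le_add_diff_inverse nat_le_linear power_increasing_iff prime_gt_1_nat power_one_right not_le)
      moreover have "q \<ge> 2" using q(1) prime_ge_2_nat by blast
      ultimately show False using P(2) by simp
    qed
    then obtain g where g: "g \<in> P" "g \<noteq> \<one>" by blast
    have gS: "g \<in> carrier (Sym \<Omega>)" using g PC CH H_S by blast
    have "g [^]\<^bsub>Sym \<Omega>\<^esub> (q ^ a) = \<one>" using sub_pow_card[OF Ps g(1)] P(2) by simp
    hence d1: "S.ord g dvd q ^ a" using S.pow_eq_id[OF gS] by simp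
    have "g [^]\<^bsub>Sym \<Omega>\<^esub> p = \<one>" using Cp g PC by blast
    hence d2: "S.ord g dvd p" using S.pow_eq_id[OF gS] by simp
    have "coprime p (q ^ a)" using primes_coprime[OF p_prime q(1)] qp by simp
    hence "S.ord g = 1" using coprime_common_divisor_nat d1 d2 by blast
    thus False using S.ord_eq_1[OF gS] g(2) by simp
  qed
  have Cpow: "card C = p ^ multiplicity p (card C)" using only_p_power[OF C0 p_prime only] by blast
  define E where "E = N - {\<one>}"
  define act where "act g y = g \<star> y \<star> iv g" for g y
  let ?Q = "(Sym \<Omega>)\<lparr>carrier := H\<rparr>"
  have grpQ: "group ?Q" using S.subgroup_imp_group[OF H_sub] .
  have closed: "act g y \<in> E" if "g \<in> carrier ?Q" "y \<in> E" for g y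
  proof -
    have g: "g \<in> H" and y: "y \<in> N" "y \<noteq> \<one>" using that E_def by auto
    have gS: "g \<in> carrier (Sym \<Omega>)" using g H_S by blast
    have yS: "y \<in> carrier (Sym \<Omega>)" using y N_S by blast
    have "act g y \<in> N" unfolding act_def using N_conj g H_G y by blast
    moreover have "act g y \<noteq> \<one>"
    proof
      assume "act g y = \<one>"
      hence "iv g \<star> act g y \<star> g = \<one>" using gS by simp
      moreover have "iv g \<star> act g y \<star> g = y" unfolding act_def using gS yS by (simp add: la)
      ultimately show False using y by simp
    qed
    ultimately show ?thesis unfolding E_def by blast
  qed
  have one: "act \<one>\<^bsub>?Q\<^esub> y = y" if "y \<in> E" for y
    using that E_def N_S unfolding act_def by auto
  have mult: "act (g \<otimes>\<^bsub>?Q\<^esub> h) y = act g (act h y)"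
    if "g \<in> carrier ?Q" "h \<in> carrier ?Q" "y \<in> E" for g h y
  proof -
    have "g \<in> carrier (Sym \<Omega>)" "h \<in> carrier (Sym \<Omega>)" "y \<in> carrier (Sym \<Omega>)"
      using that H_S E_def N_S by auto
    thus ?thesis unfolding act_def by (simp add: la S.inv_mult_group)
  qed
  define \<phi> where "\<phi> g = restrict (act g) E" for g
  interpret A: group_action ?Q E \<phi>
    unfolding \<phi>_def
    apply (rule action_as_group_action[OF grpQ])
      apply (erule (1) closed)
     apply (erule one)
    by (erule (2) mult)
  have xE: "x \<in> E" using x E_def by simp
  have orb: "orbit ?Q \<phi> x = E"
  proof
    show "orbit ?Q \<phi> x \<subseteq> E" using closed xE unfolding orbit_def \<phi>_def by auto
    show "E \<subseteq> orbit ?Q \<phi> x"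
    proof
      fix y assume y: "y \<in> E"
      obtain g where g: "g \<in> H" "g \<star> x \<star> iv g = y" using H_trans[OF xN x1, of y] y E_def by auto
      have "\<phi> g x = y" unfolding \<phi>_def act_def using g xE by simp
      thus "y \<in> orbit ?Q \<phi> x" unfolding orbit_def using g by auto
    qed
  qed
  have stab: "stabilizer ?Q \<phi> x = C"
  proof -
    have "stabilizer ?Q \<phi> x = {g \<in> H. g \<star> x \<star> iv g = x}"
      unfolding stabilizer_def \<phi>_def act_def using xE by auto
    also have "\<dots> = C" unfolding C_def' using conj_eq_iff xS H_S by blast
    finally show ?thesis .
  qed
  have "card (orbit ?Q \<phi> x) * card (stabilizer ?Q \<phi> x) = order ?Q"
    by (rule A.orbit_stabilizer_theorem[OF xE])
  hence cardH: "card E * card C = card H" using orb stab by (simp add: order_def)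
  have cE: "card E = p ^ k - 1" unfolding E_def using N_one finN N_card by (simp add: card_Diff_singleton)
  have k1: "k \<noteq> 0"
  proof
    assume "k = 0"
    hence "card N = 1" using N_card by simp
    then obtain a where "N = {a}" using card_1_singletonE by blast
    thus False using N_one N_nontriv by blast
  qed
  define b where "b = multiplicity p (card C)"
  have pH: "p dvd card H"
  proof -
    have "\<one> \<in> Hp" using subgroup.one_closed[OF Hp_sub] .
    then obtain h where h: "h \<in> Hp" "h \<noteq> \<one>" using Hp_nontriv by blast
    have "{\<one>, h} \<subseteq> Hp" using h \<open>\<one> \<in> Hp\<close> by blast
    hence "card {\<one>, h} \<le> card Hp" using card_mono[OF finHp] by blast
    moreover have "card {\<one>, h} = 2" using h(2) by simp
    ultimately have "card Hp \<ge> 2" by simp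
    hence "multiplicity p (card H) \<noteq> 0" using Hp_card by (metis power_0 numeral_le_one_iff semiring_norm(69))
    moreover have "card H \<noteq> 0"
    proof -
      have "\<one> \<in> H" using subgroup.one_closed[OF H_sub] .
      thus ?thesis using finH by auto
    qed
    moreover have "\<not> is_unit p" using prime_gt_1_nat[OF p_prime] by simp
    ultimately show ?thesis using multiplicity_gt_zero_iff[of "card H" p] by simp
  qed
  have "\<not> p dvd p ^ k - 1"
  proof
    assume a: "p dvd p ^ k - 1"
    have "p dvd p ^ k" using k1 by simp
    moreover have "p ^ k \<ge> 1" using prime_gt_0_nat[OF p_prime] by simp
    ultimately have "p dvd (p ^ k - (p ^ k - 1))" using a dvd_diff_nat by blast
    hence "p dvd 1" using \<open>p ^ k \<ge> 1\<close> by simp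
    thus False using p_prime by simp
  qed
  hence "p dvd card C" using pH cardH cE p_prime prime_dvd_mult_iff by metis
  moreover have np: "\<not> is_unit p" using prime_gt_1_nat[OF p_prime] by simp
  ultimately have "multiplicity p (card C) > 0" using multiplicity_gt_zero_iff[OF C0 np] by simp
  hence b1: "b \<ge> 1" unfolding b_def by simp
  have P3: "\<exists>b\<ge>1. card C = p ^ b \<and> card H = (p ^ k - 1) * p ^ b"
    using b1 Cpow cardH cE b_def by metis
  show ?thesis using P1 P2 P3 t C_def by blast
qed

end

theorem lemma4p5:
  fixes \<Omega> :: "'a set" and G N H Hp :: "('a \<Rightarrow> 'a) set" and p k :: nat and \<omega> :: 'a
  assumes fin: "finite \<Omega>"
    and G_sub: "subgroup G (Sym \<Omega>)"
    and two_trans: "two_transitive_on \<Omega> G"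
    and non_frob: "\<not> frobenius_on \<Omega> G"
    and p_prime: "Factorial_Ring.prime p"
    and N_normal: "N \<lhd> (Sym \<Omega>)\<lparr>carrier := G\<rparr>"
    and N_regular: "regular_on \<Omega> N"
    and N_elab: "elem_abelian \<Omega> N p"
    and N_card: "card N = p ^ k"
    and \<omega>: "\<omega> \<in> \<Omega>"
    and H_def: "H = point_stab \<Omega> G \<omega>"
    and Hp_syl: "sylow_sub \<Omega> p H Hp"
    and Hp_nontriv: "Hp \<noteq> {\<one>\<^bsub>Sym \<Omega>\<^esub>}"
  shows "commutator_subgroup \<Omega> N Hp \<subset> N \<and>
         (\<forall>t\<in>Hp. \<forall>z\<in>N - commutator_subgroup \<Omega> N Hp.
            derangement \<Omega> (t \<otimes>\<^bsub>Sym \<Omega>\<^esub> z)) \<and>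
        (kappa \<Omega> G = 2 \<longrightarrow> (\<forall>x\<in>N - {\<one>\<^bsub>Sym \<Omega>\<^esub>}.
         (\<forall>h\<in>Hp. h [^]\<^bsub>Sym \<Omega>\<^esub> p = \<one>\<^bsub>Sym \<Omega>\<^esub>) \<and>
         (\<exists>t\<in>Hp - {\<one>\<^bsub>Sym \<Omega>\<^esub>}. Hp - {\<one>\<^bsub>Sym \<Omega>\<^esub>} \<subseteq> conj_class \<Omega> H t) \<and>
         (\<exists>b\<ge>1. card (centraliser \<Omega> H x) = p ^ b \<and> card H = (p ^ k - 1) * p ^ b)))"
  proof -
  interpret L: L \<Omega> G N H Hp p k \<omega>
    by (rule L.intro) (rule assms)+
  have 1: "commutator_subgroup \<Omega> N Hp \<subset> N" by (rule L.comm_proper)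
  have 2: "\<forall>t\<in>Hp. \<forall>z\<in>N - commutator_subgroup \<Omega> N Hp. derangement \<Omega> (t \<otimes>\<^bsub>Sym \<Omega>\<^esub> z)"
    using L.deranged_part by blast
  have 3: "kappa \<Omega> G = 2 \<longrightarrow> (\<forall>x\<in>N - {\<one>\<^bsub>Sym \<Omega>\<^esub>}.
         (\<forall>h\<in>Hp. h [^]\<^bsub>Sym \<Omega>\<^esub> p = \<one>\<^bsub>Sym \<Omega>\<^esub>) \<and>
         (\<exists>t\<in>Hp - {\<one>\<^bsub>Sym \<Omega>\<^esub>}. Hp - {\<one>\<^bsub>Sym \<Omega>\<^esub>} \<subseteq> conj_class \<Omega> H t) \<and>
         (\<exists>b\<ge>1. card (centraliser \<Omega> H x) = p ^ b \<and> card H = (p ^ k - 1) * p ^ b))"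
    using L.part_ii by blast
  show ?thesis using 1 2 3 by blast
qed

end
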